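(* Consider the two-player continuous time stochastic game with $S=\{1,2\}$, $A^1(1)=A^2(1)=\{1,2\}$, $A^1(2)=A^2(2)=\{1\}$, rewards $(r^1,r^2)$ and transition rates as follows: at state $1$, $(a^1,a^2)=(1,1)$ gives rewards $(4,9)$ and $\mu(2,1,1,1)=0$; $(1,2)$ gives $(6,3)$ and $\mu(2,1,1,2)=1$; $(2,1)$ gives $(5,4)$ and $\mu(2,1,2,1)=0$; $(2,2)$ gives $(4,5)$ and $\mu(2,1,2,2)=1$; at state $2$ the single action pair gives $(6,7)$ and $\mu(1,2,1,1)=1$. Then for every discount rate $\alpha>0$ the game has a unique stationary $\alpha$-discounted Nash equilibrium, namely $f^*_\alpha(1)=\left(\frac{4+\alpha}{12+7\alpha},\frac{8+6\alpha}{12+7\alpha}\right)$, $g^*_\alpha(1)=(\frac23,\frac13)$. Consequently this game (in which transition rates depend only on player 2's actions) has no stationary Blackwell-Nash equilibrium.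
   Context: A two-player continuous time stochastic game consists of a finite state set $S$, finite nonempty action sets $A^1(s),A^2(s)$, reward rates $r^i(s,a^1,a^2)$ ($i=1,2$), and transition rates $\mu(s',s,a^1,a^2)\ge0$ from $s$ to $s'\ne s$, with $\mu(s,s,a^1,a^2)=-\sum_{s'\ne s}\mu(s',s,a^1,a^2)$. Stationary strategies $f,g$ assign to each state a probability distribution on $A^1(s)$, resp. $A^2(s)$. For a stationary pair, $r^i(s,f,g)=\sum_{a^1,a^2}f(s,a^1)g(s,a^2)r^i(s,a^1,a^2)$ and $Q(f,g)$ is the generator matrix with $Q(f,g)_{ss'}=\sum_{a^1,a^2}f(s,a^1)g(s,a^2)\mu(s',s,a^1,a^2)$. For $\alpha>0$ the $\alpha$-discounted payoff is $v^i_\alpha(s,f,g)=E^s_{f,g}\int_0^\infty e^{-\alpha t}r^i(s_t,f,g)\,dt$, i.e. $v^i_\alpha(f,g)=(\alpha I-Q(f,g))^{-1}r^i(f,g)$. A stationary pair $(f^*,g^* )$ is an $\alpha$-discounted Nash equilibrium if for all $s$, $v^1_\alpha(s,f^*,g^* )\ge v^1_\alpha(s,f,g^* )$ for all stationary $f$ and $v^2_\alpha(s,f^*,g^* )\ge v^2_\alpha(s,f^*,g)$ for all stationary $g$. It is a Blackwell-Nash equilibrium (BNE) if there is $\alpha_0>0$ such that it is an $\alpha$-discounted Nash equilibrium for all $\alpha\in(0,\alpha_0]$. *)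

theory Defs
  imports "HOL-Analysis.Analysis"
begin

text \<open>Rewards r s a1 a2; transition rates
  mu s' s a1 a2 from s to s' (only used for s' different from s; the diagonal is
  defined by the generator convention).\<close>

definition stationary :: "('s \<Rightarrow> nat set) \<Rightarrow> ('s \<Rightarrow> nat \<Rightarrow> real) \<Rightarrow> bool" where
  "stationary A f \<longleftrightarrow> (\<forall>s. (\<forall>a\<in>A s. f s a \<ge> 0) \<and> (\<forall>a. a \<notin> A s \<longrightarrow> f s a = 0)
      \<and> (\<Sum>a\<in>A s. f s a) = 1)"

definition gen_rate :: "('s::finite \<Rightarrow> 's \<Rightarrow> nat \<Rightarrow> nat \<Rightarrow> real) \<Rightarrow> 's \<Rightarrow> 's \<Rightarrow> nat \<Rightarrow> nat \<Rightarrow> real" where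
  "gen_rate mu s' s a1 a2 =
     (if s' = s then - (\<Sum>t\<in>UNIV - {s}. mu t s a1 a2) else mu s' s a1 a2)"

definition reward_vec ::
  "('s::finite \<Rightarrow> nat set) \<Rightarrow> ('s \<Rightarrow> nat set) \<Rightarrow> ('s \<Rightarrow> nat \<Rightarrow> nat \<Rightarrow> real)
   \<Rightarrow> ('s \<Rightarrow> nat \<Rightarrow> real) \<Rightarrow> ('s \<Rightarrow> nat \<Rightarrow> real) \<Rightarrow> real ^ 's" where
  "reward_vec A1 A2 r f g = (\<chi> s. \<Sum>a1\<in>A1 s. \<Sum>a2\<in>A2 s. f s a1 * g s a2 * r s a1 a2)"

definition gen_matrix ::
  "('s::finite \<Rightarrow> nat set) \<Rightarrow> ('s \<Rightarrow> nat set) \<Rightarrow> ('s \<Rightarrow> 's \<Rightarrow> nat \<Rightarrow> nat \<Rightarrow> real)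
   \<Rightarrow> ('s \<Rightarrow> nat \<Rightarrow> real) \<Rightarrow> ('s \<Rightarrow> nat \<Rightarrow> real) \<Rightarrow> real ^ 's ^ 's" where
  "gen_matrix A1 A2 mu f g =
     (\<chi> s s'. \<Sum>a1\<in>A1 s. \<Sum>a2\<in>A2 s. f s a1 * g s a2 * gen_rate mu s' s a1 a2)"

definition disc_payoff ::
  "('s::finite \<Rightarrow> nat set) \<Rightarrow> ('s \<Rightarrow> nat set) \<Rightarrow> ('s \<Rightarrow> nat \<Rightarrow> nat \<Rightarrow> real)
   \<Rightarrow> ('s \<Rightarrow> 's \<Rightarrow> nat \<Rightarrow> nat \<Rightarrow> real) \<Rightarrow> real
   \<Rightarrow> ('s \<Rightarrow> nat \<Rightarrow> real) \<Rightarrow> ('s \<Rightarrow> nat \<Rightarrow> real) \<Rightarrow> real ^ 's" where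
  "disc_payoff A1 A2 r mu \<alpha> f g =
     matrix_inv (\<alpha> *\<^sub>R mat 1 - gen_matrix A1 A2 mu f g) *v reward_vec A1 A2 r f g"

definition disc_NE ::
  "('s::finite \<Rightarrow> nat set) \<Rightarrow> ('s \<Rightarrow> nat set) \<Rightarrow> ('s \<Rightarrow> nat \<Rightarrow> nat \<Rightarrow> real)
   \<Rightarrow> ('s \<Rightarrow> nat \<Rightarrow> nat \<Rightarrow> real) \<Rightarrow> ('s \<Rightarrow> 's \<Rightarrow> nat \<Rightarrow> nat \<Rightarrow> real) \<Rightarrow> real
   \<Rightarrow> ('s \<Rightarrow> nat \<Rightarrow> real) \<Rightarrow> ('s \<Rightarrow> nat \<Rightarrow> real) \<Rightarrow> bool" where
  "disc_NE A1 A2 r1 r2 mu \<alpha> f g \<longleftrightarrow>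
     stationary A1 f \<and> stationary A2 g \<and>
     (\<forall>f'. stationary A1 f' \<longrightarrow> (\<forall>s. disc_payoff A1 A2 r1 mu \<alpha> f g $ s \<ge> disc_payoff A1 A2 r1 mu \<alpha> f' g $ s)) \<and>
     (\<forall>g'. stationary A2 g' \<longrightarrow> (\<forall>s. disc_payoff A1 A2 r2 mu \<alpha> f g $ s \<ge> disc_payoff A1 A2 r2 mu \<alpha> f g' $ s))"

definition blackwell_NE ::
  "('s::finite \<Rightarrow> nat set) \<Rightarrow> ('s \<Rightarrow> nat set) \<Rightarrow> ('s \<Rightarrow> nat \<Rightarrow> nat \<Rightarrow> real)
   \<Rightarrow> ('s \<Rightarrow> nat \<Rightarrow> nat \<Rightarrow> real) \<Rightarrow> ('s \<Rightarrow> 's \<Rightarrow> nat \<Rightarrow> nat \<Rightarrow> real)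
   \<Rightarrow> ('s \<Rightarrow> nat \<Rightarrow> real) \<Rightarrow> ('s \<Rightarrow> nat \<Rightarrow> real) \<Rightarrow> bool" where
  "blackwell_NE A1 A2 r1 r2 mu f g \<longleftrightarrow>
     (\<exists>\<alpha>0>0. \<forall>\<alpha>. 0 < \<alpha> \<and> \<alpha> \<le> \<alpha>0 \<longrightarrow> disc_NE A1 A2 r1 r2 mu \<alpha> f g)"

datatype st = S1 | S2

lemma UNIV_st: "(UNIV :: st set) = {S1, S2}"
  using st.exhaust by auto

instance st :: finite
  by standard (simp add: UNIV_st)

definition exA1 :: "st \<Rightarrow> nat set" where
  "exA1 s = (case s of S1 \<Rightarrow> {1, 2} | S2 \<Rightarrow> {1})"

definition exA2 :: "st \<Rightarrow> nat set" where
  "exA2 s = (case s of S1 \<Rightarrow> {1, 2} | S2 \<Rightarrow> {1})"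

definition exr1 :: "st \<Rightarrow> nat \<Rightarrow> nat \<Rightarrow> real" where
  "exr1 s a1 a2 = (case s of
      S1 \<Rightarrow> (if a1 = 1 \<and> a2 = 1 then 4 else if a1 = 1 \<and> a2 = 2 then 6
             else if a1 = 2 \<and> a2 = 1 then 5 else if a1 = 2 \<and> a2 = 2 then 4 else 0)
    | S2 \<Rightarrow> (if a1 = 1 \<and> a2 = 1 then 6 else 0))"

definition exr2 :: "st \<Rightarrow> nat \<Rightarrow> nat \<Rightarrow> real" where
  "exr2 s a1 a2 = (case s of
      S1 \<Rightarrow> (if a1 = 1 \<and> a2 = 1 then 9 else if a1 = 1 \<and> a2 = 2 then 3
             else if a1 = 2 \<and> a2 = 1 then 4 else if a1 = 2 \<and> a2 = 2 then 5 else 0)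
    | S2 \<Rightarrow> (if a1 = 1 \<and> a2 = 1 then 7 else 0))"

definition exmu :: "st \<Rightarrow> st \<Rightarrow> nat \<Rightarrow> nat \<Rightarrow> real" where
  "exmu s' s a1 a2 = (if s' = S2 \<and> s = S1 then (if a2 = 2 then 1 else 0)
                     else if s' = S1 \<and> s = S2 then 1 else 0)"

definition fstar :: "real \<Rightarrow> st \<Rightarrow> nat \<Rightarrow> real" where
  "fstar \<alpha> s a = (case s of
      S1 \<Rightarrow> (if a = 1 then (4 + \<alpha>) / (12 + 7 * \<alpha>)
             else if a = 2 then (8 + 6 * \<alpha>) / (12 + 7 * \<alpha>) else 0)
    | S2 \<Rightarrow> (if a = 1 then 1 else 0))"

definition gstar :: "st \<Rightarrow> nat \<Rightarrow> real" where
  "gstar s a = (case s of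
      S1 \<Rightarrow> (if a = 1 then 2 / 3 else if a = 2 then 1 / 3 else 0)
    | S2 \<Rightarrow> (if a = 1 then 1 else 0))"

end

theory Submission
  imports Defs
begin

lemma all_st: "(\<forall>i::st. P i) = (P S1 \<and> P S2)" by (metis st.exhaust)
lemma sum_st: "(\<Sum>i\<in>(UNIV::st set). h i) = h S1 + h S2" by (simp add: UNIV_st)

lemma inv2:
  fixes M :: "real^st^st"
  defines "dd \<equiv> M$S1$S1*M$S2$S2 - M$S1$S2*M$S2$S1"
  assumes d: "dd \<noteq> 0"
  shows "matrix_inv M *v b = (\<chi> i. if i = S1 then (M$S2$S2*b$S1 - M$S1$S2*b$S2)/dd
                                    else (M$S1$S1*b$S2 - M$S2$S1*b$S1)/dd)"
proof -
  define N :: "real^st^st" where "N = (\<chi> i j. if i = S1 then (if j = S1 then M$S2$S2/dd else - M$S1$S2/dd)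
                                    else (if j = S1 then - M$S2$S1/dd else M$S1$S1/dd))"
  have MN: "M ** N = mat 1" using d
    by (simp add: matrix_matrix_mult_def mat_def vec_eq_iff all_st sum_st N_def field_simps) (simp add: dd_def algebra_simps)
  have NM: "N ** M = mat 1" using d
    by (simp add: matrix_matrix_mult_def mat_def vec_eq_iff all_st sum_st N_def field_simps) (simp add: dd_def algebra_simps)
  have ex: "\<exists>A'. M ** A' = mat 1 \<and> A' ** M = mat 1" using MN NM by blast
  have X: "M ** matrix_inv M = mat 1 \<and> matrix_inv M ** M = mat 1"
    unfolding matrix_inv_def by (rule someI_ex[OF ex])
  have "matrix_inv M *v b = matrix_inv M *v (M *v (N *v b))"
    by (simp add: matrix_vector_mul_assoc MN)
  also have "\<dots> = N *v b" by (metis X matrix_vector_mul_assoc matrix_vector_mul_lid)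
  finally have e: "matrix_inv M *v b = N *v b" .
  show ?thesis unfolding e
    by (simp add: matrix_vector_mult_def vec_eq_iff all_st sum_st N_def diff_divide_distrib algebra_simps)
qed

definition FF :: "real \<Rightarrow> st \<Rightarrow> nat \<Rightarrow> real" where
  "FF p s a = (case s of S1 \<Rightarrow> (if a = 1 then p else if a = 2 then 1 - p else 0)
      | S2 \<Rightarrow> (if a = 1 then 1 else 0))"

lemma stat1: "stationary exA1 f \<longleftrightarrow> (\<exists>p. 0 \<le> p \<and> p \<le> 1 \<and> f = FF p)"
proof
  assume h: "stationary exA1 f"
  have a: "f S1 1 \<ge> 0" "f S1 2 \<ge> 0" "f S1 1 + f S1 2 = 1" "f S2 1 = 1"
    "\<And>a. a \<noteq> 1 \<Longrightarrow> a \<noteq> 2 \<Longrightarrow> f S1 a = 0" "\<And>a. a \<noteq> 1 \<Longrightarrow> f S2 a = 0"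
    using h unfolding stationary_def exA1_def by (auto simp: all_st)
  have "f = FF (f S1 1)"
    by (rule ext, rule ext, simp add: FF_def split: st.split) (use a in auto)
  with a show "\<exists>p. 0 \<le> p \<and> p \<le> 1 \<and> f = FF p" by (intro exI[of _ "f S1 1"]) auto
next
  assume "\<exists>p. 0 \<le> p \<and> p \<le> 1 \<and> f = FF p"
  then show "stationary exA1 f" unfolding stationary_def exA1_def FF_def
    by (auto simp: all_st)
qed

lemma stat2: "stationary exA2 f \<longleftrightarrow> (\<exists>p. 0 \<le> p \<and> p \<le> 1 \<and> f = FF p)"
  using stat1 unfolding stationary_def exA1_def exA2_def by simp

lemma payoff:
  assumes "\<alpha> > 0" "0 \<le> q" "q \<le> 1"
  shows "disc_payoff exA1 exA2 r exmu \<alpha> (FF p) (FF q) =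
    (let R = p*q*r S1 1 1 + p*(1-q)*r S1 1 2 + (1-p)*q*r S1 2 1 + (1-p)*(1-q)*r S1 2 2;
         R' = r S2 1 1; l = 1 - q; dn = \<alpha>*(\<alpha>+1+l) in
     (\<chi> i. if i = S1 then ((\<alpha>+1)*R + l*R')/dn else (R + (\<alpha>+l)*R')/dn))"
proof -
  have m: "\<alpha> *\<^sub>R mat 1 - gen_matrix exA1 exA2 exmu (FF p) (FF q) =
     (\<chi> i j. if i = S1 then (if j = S1 then \<alpha> + (1-q) else -(1-q)) else (if j = S1 then -1 else \<alpha>+1))"
    by (simp add: gen_matrix_def gen_rate_def exA1_def exA2_def exmu_def FF_def vec_eq_iff all_st
        mat_def UNIV_st algebra_simps)
  have rv: "reward_vec exA1 exA2 r (FF p) (FF q) = (\<chi> i. if i = S1 then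
      p*q*r S1 1 1 + p*(1-q)*r S1 1 2 + (1-p)*q*r S1 2 1 + (1-p)*(1-q)*r S1 2 2 else r S2 1 1)"
    by (simp add: reward_vec_def exA1_def exA2_def FF_def vec_eq_iff all_st)
  have dpos: "\<alpha>*(\<alpha>+1+(1-q)) > 0" using assms by simp
  have dd: "(\<alpha> + (1-q))*(\<alpha>+1) - (-(1-q))*(-1) = \<alpha>*(\<alpha>+1+(1-q))" by algebra
  show ?thesis unfolding disc_payoff_def m rv
    apply (subst inv2)
    using dpos dd by (auto simp: vec_eq_iff all_st Let_def field_simps)
qed

lemma frac_le: fixes X Y d1 d2 :: real assumes "d1 > 0" "d2 > 0"
  shows "X/d1 \<le> Y/d2 \<longleftrightarrow> X*d2 \<le> Y*d1"
  using assms by (simp add: divide_le_eq le_divide_eq field_simps)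

lemma same_den:
  fixes A B c d x :: real
  assumes "d > 0" "c > 0" "A - B = c*x"
  shows "A/d \<le> B/d \<longleftrightarrow> x \<le> 0"
proof -
  have "A/d \<le> B/d \<longleftrightarrow> A \<le> B" using assms(1) by (simp add: divide_le_cancel)
  also have "\<dots> \<longleftrightarrow> c*x \<le> 0" using assms(3) by linarith
  also have "\<dots> \<longleftrightarrow> x \<le> 0" using assms(2) by (simp add: mult_le_0_iff)
  finally show ?thesis .
qed

lemma r1v: "exr1 S1 1 1 = 4" "exr1 S1 1 2 = 6" "exr1 S1 2 1 = 5" "exr1 S1 2 2 = 4" "exr1 S2 1 1 = 6"
  by (simp_all add: exr1_def)
lemma r2v: "exr2 S1 1 1 = 9" "exr2 S1 1 2 = 3" "exr2 S1 2 1 = 4" "exr2 S1 2 2 = 5" "exr2 S2 1 1 = 7"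
  by (simp_all add: exr2_def)

lemma dev1:
  assumes "\<alpha> > 0" "0 \<le> q" "q \<le> 1"
  shows "disc_payoff exA1 exA2 exr1 exmu \<alpha> (FF p') (FF q) $ s \<le> disc_payoff exA1 exA2 exr1 exmu \<alpha> (FF p) (FF q) $ s
     \<longleftrightarrow> (p'-p)*(2-3*q) \<le> 0"
proof -
  have dpos: "\<alpha>*(\<alpha>+1+(1-q)) > 0" using assms by simp
  show ?thesis
  proof (cases s)
    case S1
    have e: "((\<alpha>+1)*(p'*q*4 + p'*(1-q)*6 + (1-p')*q*5 + (1-p')*(1-q)*4) + (1-q)*6)
        - ((\<alpha>+1)*(p*q*4 + p*(1-q)*6 + (1-p)*q*5 + (1-p)*(1-q)*4) + (1-q)*6)
       = (\<alpha>+1) * ((p'-p)*(2-3*q))" by algebra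
    show ?thesis unfolding payoff[OF assms] Let_def vec_lambda_beta r1v S1
      apply (simp only: if_True if_False st.distinct simp_thms)
      apply (rule same_den[OF dpos _ e]) using assms by simp
  next
    case S2
    have e: "((p'*q*4 + p'*(1-q)*6 + (1-p')*q*5 + (1-p')*(1-q)*4) + (\<alpha>+(1-q))*6)
        - ((p*q*4 + p*(1-q)*6 + (1-p)*q*5 + (1-p)*(1-q)*4) + (\<alpha>+(1-q))*6)
       = 1 * ((p'-p)*(2-3*q))" by algebra
    show ?thesis unfolding payoff[OF assms] Let_def vec_lambda_beta r1v S2
      apply (simp only: if_True if_False st.distinct simp_thms)
      apply (rule same_den[OF dpos _ e]) by simp
  qed
qed

lemma cross_den:
  fixes A B c d1 d2 x :: real
  assumes "d1 > 0" "d2 > 0" "c > 0" "A*d2 - B*d1 = c*x"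
  shows "A/d1 \<le> B/d2 \<longleftrightarrow> x \<le> 0"
proof -
  have "A/d1 \<le> B/d2 \<longleftrightarrow> A*d2 \<le> B*d1" using assms(1,2) by (simp add: frac_le)
  also have "\<dots> \<longleftrightarrow> c*x \<le> 0" using assms(4) by linarith
  also have "\<dots> \<longleftrightarrow> x \<le> 0" using assms(3) by (simp add: mult_le_0_iff)
  finally show ?thesis .
qed

lemma dev2:
  assumes "\<alpha> > 0" "0 \<le> q" "q \<le> 1" "0 \<le> q'" "q' \<le> 1"
  shows "disc_payoff exA1 exA2 exr2 exmu \<alpha> (FF p) (FF q') $ s \<le> disc_payoff exA1 exA2 exr2 exmu \<alpha> (FF p) (FF q) $ s
     \<longleftrightarrow> (q-q')*(\<alpha>+4 - p*(12+7*\<alpha>)) \<le> 0"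
proof -
  have dpos: "\<alpha>*(\<alpha>+1+(1-q)) > 0" using assms by simp
  have dpos': "\<alpha>*(\<alpha>+1+(1-q')) > 0" using assms by simp
  show ?thesis
  proof (cases s)
    case S1
    have e: "((\<alpha>+1)*(p*q'*9 + p*(1-q')*3 + (1-p)*q'*4 + (1-p)*(1-q')*5) + (1-q')*7)*(\<alpha>*(\<alpha>+1+(1-q)))
        - ((\<alpha>+1)*(p*q*9 + p*(1-q)*3 + (1-p)*q*4 + (1-p)*(1-q)*5) + (1-q)*7)*(\<alpha>*(\<alpha>+1+(1-q')))
       = (\<alpha>*(\<alpha>+1)) * ((q-q')*(\<alpha>+4 - p*(12+7*\<alpha>)))" by algebra
    show ?thesis unfolding payoff[OF assms(1-3)] payoff[OF assms(1,4,5)] Let_def vec_lambda_beta r2v S1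
      apply (simp only: if_True if_False st.distinct simp_thms)
      apply (rule cross_den[OF dpos' dpos _ e]) using assms by simp
  next
    case S2
    have e: "((p*q'*9 + p*(1-q')*3 + (1-p)*q'*4 + (1-p)*(1-q')*5) + (\<alpha>+(1-q'))*7)*(\<alpha>*(\<alpha>+1+(1-q)))
        - ((p*q*9 + p*(1-q)*3 + (1-p)*q*4 + (1-p)*(1-q)*5) + (\<alpha>+(1-q))*7)*(\<alpha>*(\<alpha>+1+(1-q')))
       = \<alpha> * ((q-q')*(\<alpha>+4 - p*(12+7*\<alpha>)))" by algebra
    show ?thesis unfolding payoff[OF assms(1-3)] payoff[OF assms(1,4,5)] Let_def vec_lambda_beta r2v S2
      apply (simp only: if_True if_False st.distinct simp_thms)
      apply (rule cross_den[OF dpos' dpos _ e]) using assms by simp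
  qed
qed

lemma NE_FF:
  assumes "\<alpha> > 0" "0 \<le> p" "p \<le> 1" "0 \<le> q" "q \<le> 1"
  shows "disc_NE exA1 exA2 exr1 exr2 exmu \<alpha> (FF p) (FF q) \<longleftrightarrow>
    (\<forall>p'. 0 \<le> p' \<and> p' \<le> 1 \<longrightarrow> (p'-p)*(2-3*q) \<le> 0) \<and>
    (\<forall>q'. 0 \<le> q' \<and> q' \<le> 1 \<longrightarrow> (q-q')*(\<alpha>+4 - p*(12+7*\<alpha>)) \<le> 0)"
proof -
  have i1: "(\<forall>f'. stationary exA1 f' \<longrightarrow> (\<forall>s. disc_payoff exA1 exA2 exr1 exmu \<alpha> (FF p) (FF q) $ s \<ge> disc_payoff exA1 exA2 exr1 exmu \<alpha> f' (FF q) $ s))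
     \<longleftrightarrow> (\<forall>p'. 0 \<le> p' \<and> p' \<le> 1 \<longrightarrow> (p'-p)*(2-3*q) \<le> 0)"
    unfolding stat1 using assms by (auto simp: dev1)
  have i2: "(\<forall>g'. stationary exA2 g' \<longrightarrow> (\<forall>s. disc_payoff exA1 exA2 exr2 exmu \<alpha> (FF p) (FF q) $ s \<ge> disc_payoff exA1 exA2 exr2 exmu \<alpha> (FF p) g' $ s))
     \<longleftrightarrow> (\<forall>q'. 0 \<le> q' \<and> q' \<le> 1 \<longrightarrow> (q-q')*(\<alpha>+4 - p*(12+7*\<alpha>)) \<le> 0)"
    unfolding stat2 using assms by (auto simp: dev2)
  have "stationary exA1 (FF p)" "stationary exA2 (FF q)" unfolding stat1 stat2 using assms by auto
  then show ?thesis unfolding disc_NE_def i1 i2 by simp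
qed

lemma fstar_FF: "\<alpha> > 0 \<Longrightarrow> fstar \<alpha> = FF ((4+\<alpha>)/(12+7*\<alpha>))"
  by (rule ext, rule ext) (auto simp: fstar_def FF_def field_simps split: st.split)

lemma gstar_FF: "gstar = FF (2/3)"
  by (rule ext, rule ext) (auto simp: gstar_def FF_def split: st.split)

lemma FF_inj: "FF p = FF p' \<Longrightarrow> p = p'"
  by (drule fun_cong[of _ _ S1], drule fun_cong[of _ _ 1]) (simp add: FF_def)

lemma NE_unique:
  assumes a: "\<alpha> > 0"
  shows "disc_NE exA1 exA2 exr1 exr2 exmu \<alpha> f g \<longleftrightarrow> f = fstar \<alpha> \<and> g = gstar"
proof
  assume ne: "disc_NE exA1 exA2 exr1 exr2 exmu \<alpha> f g"
  then obtain p q where p: "0 \<le> p" "p \<le> 1" "f = FF p" and q: "0 \<le> q" "q \<le> 1" "g = FF q"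
    unfolding disc_NE_def stat1 stat2 by blast
  define D where "D = \<alpha>+4 - p*(12+7*\<alpha>)"
  have c: "\<forall>p'. 0 \<le> p' \<and> p' \<le> 1 \<longrightarrow> (p'-p)*(2-3*q) \<le> 0"
     "\<forall>q'. 0 \<le> q' \<and> q' \<le> 1 \<longrightarrow> (q-q')*D \<le> 0"
    using ne NE_FF[OF a p(1,2) q(1,2)] p(3) q(3) D_def by auto
  have h1: "(1-p)*(2-3*q) \<le> 0" using c(1) by auto
  have h2: "(0-p)*(2-3*q) \<le> 0" using c(1) by auto
  have h3: "(q-0)*D \<le> 0" using c(2) by auto
  have h4: "(q-1)*D \<le> 0" using c(2) by auto
  have q23: "q = 2/3"
  proof (rule ccontr)
    assume "q \<noteq> 2/3"
    then consider "2-3*q > 0" | "2-3*q < 0" by linarith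
    then show False
    proof cases
      case 1
      then have "1-p \<le> 0" using h1 by (simp add: mult_le_0_iff)
      then have "p = 1" using p by linarith
      then have "D < 0" using a D_def by simp
      then have "q - 1 \<ge> 0" using h4 by (simp add: mult_le_0_iff)
      then show False using 1 by linarith
    next
      case 2
      then have "p \<le> 0" using h2 by (simp add: mult_le_0_iff zero_le_mult_iff)
      then have "p = 0" using p by linarith
      then have "D > 0" using a D_def by simp
      then have "q \<le> 0" using h3 by (simp add: mult_le_0_iff)
      then show False using 2 by linarith
    qed
  qed
  have "D = 0" using h3 h4 q23 by simp
  then have "p = (4+\<alpha>)/(12+7*\<alpha>)" using a unfolding D_def by (simp add: field_simps)
  then show "f = fstar \<alpha> \<and> g = gstar" using p(3) q(3) q23 fstar_FF[OF a] gstar_FF by simp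
next
  assume h: "f = fstar \<alpha> \<and> g = gstar"
  define p where "p = (4+\<alpha>)/(12+7*\<alpha>)"
  have p: "0 \<le> p" "p \<le> 1" using a unfolding p_def by (simp_all add: field_simps)
  have D: "\<alpha>+4 - p*(12+7*\<alpha>) = 0" using a unfolding p_def by (simp add: field_simps)
  show "disc_NE exA1 exA2 exr1 exr2 exmu \<alpha> f g"
    using h fstar_FF[OF a] gstar_FF NE_FF[OF a p, of "2/3"] D p_def by simp
qed

theorem mainTheorem5:
  shows "(\<forall>\<alpha>>0. \<forall>f g. disc_NE exA1 exA2 exr1 exr2 exmu \<alpha> f g \<longleftrightarrow> f = fstar \<alpha> \<and> g = gstar)
    \<and> \<not> (\<exists>f g. blackwell_NE exA1 exA2 exr1 exr2 exmu f g)"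
proof (intro conjI allI impI notI)
  fix \<alpha> :: real and f g assume "\<alpha> > 0"
  then show "disc_NE exA1 exA2 exr1 exr2 exmu \<alpha> f g \<longleftrightarrow> f = fstar \<alpha> \<and> g = gstar"
    by (rule NE_unique)
next
  assume "\<exists>f g. blackwell_NE exA1 exA2 exr1 exr2 exmu f g"
  then obtain f g a0 where a0: "a0 > 0" and h: "\<forall>\<alpha>. 0 < \<alpha> \<and> \<alpha> \<le> a0 \<longrightarrow> disc_NE exA1 exA2 exr1 exr2 exmu \<alpha> f g"
    unfolding blackwell_NE_def by blast
  have "f = fstar a0" using h a0 NE_unique[OF a0] by auto
  moreover have "f = fstar (a0/2)"
  proof -
    have a1: "a0/2 > 0" using a0 by simp
    have "disc_NE exA1 exA2 exr1 exr2 exmu (a0/2) f g" using h a0 by simp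
    then show ?thesis using NE_unique[OF a1] by blast
  qed
  ultimately have "FF ((4+a0)/(12+7*a0)) = FF ((4+a0/2)/(12+7*(a0/2)))"
    using fstar_FF[OF a0] fstar_FF[of "a0/2"] a0 by simp
  then have e: "(4+a0)/(12+7*a0) = (4+a0/2)/(12+7*(a0/2))" by (rule FF_inj)
  have "(4+a0)*(12+7*(a0/2)) = (4+a0/2)*(12+7*a0)" using e a0 by (simp add: field_simps)
  then have "16*a0 = 8*a0" by (simp add: algebra_simps)
  then show False using a0 by simp
qed

end
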